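(* Let $S=(s_{ij})_{i,j=1,2}$ be a real invertible $2\times2$ matrix, $\omega\in\mathbb R^2$, $\varepsilon>0$, and $B=\{k\in\mathbb R^2:2|S(k-\omega)|<\varepsilon\}$. Then for $j=1,2$, $$\frac{1}{(2\pi)^2}\lim_{\eta\to0^+}\eta\int_{B}dk\,\frac{\partial_{k_j}^2\big(|S(k-\omega)|\big)}{\eta^2+4|S(k-\omega)|^2}=\frac{s_{1j}^2+s_{2j}^2}{16\,|\det S|}.$$ Consequently, under the hypotheses of the linearization proposition, $\sigma_{jj}=\frac1{16}\sum_{l=1}^n\frac{s_{l,1j}^2+s_{l,2j}^2}{|\det S_l|}$.
   Context: Here $\partial_{k_j}^2|S(k-\omega)|$ is the classical second partial derivative, defined for $k\neq\omega$ (the integrand is integrable near $k=\omega$). In the consequence, $\sigma_{jj}$ is the longitudinal conductivity of a lattice Hamiltonian whose Bloch bands $\Lambda_\pm$ closest to the Fermi energy $\mu$ have conical intersections $\Lambda_\pm(k)=\mu\pm|S_l(k-\omega_l)|+a_l\cdot(k-\omega_l)+o(|k-\omega_l|)$ at the $n$ Fermi points $\omega_l$, and $s_{l,ij}$ is the $(i,j)$ entry of $S_l$; the linearization proposition expresses $\sigma_{jj}=\frac{1}{(2\pi)^2}\sum_{l}\lim_{\eta\to0^+}\eta\int_{2|S_l(k-\omega_l)|<\varepsilon}\frac{\partial_j^2|S_l(k-\omega_l)|}{\eta^2+4|S_l(k-\omega_l)|^2}dk$. *)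

theory Defs
  imports "HOL-Analysis.Analysis"
begin

definition partial2 :: "(real^2 \<Rightarrow> real) \<Rightarrow> 2 \<Rightarrow> real^2 \<Rightarrow> real" where
  "partial2 g j k = deriv (deriv (\<lambda>t. g (k + t *\<^sub>R axis j 1))) 0"

definition lin_integral :: "real^2^2 \<Rightarrow> real^2 \<Rightarrow> real \<Rightarrow> 2 \<Rightarrow> real \<Rightarrow> real" where
  "lin_integral S w \<epsilon> j \<eta> =
     \<eta> * integral {k. 2 * norm (S *v (k - w)) < \<epsilon>}
       (\<lambda>k. partial2 (\<lambda>q. norm (S *v (q - w))) j k / (\<eta>\<^sup>2 + 4 * (norm (S *v (k - w)))\<^sup>2))"

end

theory Submission
  imports Defs
begin


lemma vec1_eq: "(x :: real^1) = y \<longleftrightarrow> x $ 1 = y $ 1"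
  by (simp add: vec_eq_iff forall_1)

lemma cov_real:
  fixes F :: "real^'m::{finite,wellorder} \<Rightarrow> real" and g :: "real^'m::_ \<Rightarrow> real^'m::_"
  assumes S: "S \<in> sets lebesgue"
    and der_g: "\<And>x. x \<in> S \<Longrightarrow> (g has_derivative g' x) (at x within S)"
    and inj: "inj_on g S"
  shows "(\<lambda>x. \<bar>det (matrix (g' x))\<bar> * F(g x)) absolutely_integrable_on S \<and>
           integral S (\<lambda>x. \<bar>det (matrix (g' x))\<bar> * F(g x)) = b
     \<longleftrightarrow> F absolutely_integrable_on (g ` S) \<and> integral (g ` S) F = b"
proof -
  define f :: "real^'m::{finite,wellorder} \<Rightarrow> real^1" where "f y = vec (F y)" for y
  have th: "(\<lambda>x. \<bar>det (matrix (g' x))\<bar> *\<^sub>R f(g x)) absolutely_integrable_on S \<and>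
           integral S (\<lambda>x. \<bar>det (matrix (g' x))\<bar> *\<^sub>R f(g x)) = vec b
     \<longleftrightarrow> f absolutely_integrable_on (g ` S) \<and> integral (g ` S) f = vec b"
    by (rule has_absolute_integral_change_of_variables[OF S der_g inj])
  have c1: "(\<lambda>x. \<bar>det (matrix (g' x))\<bar> *\<^sub>R f(g x)) absolutely_integrable_on S \<longleftrightarrow>
        (\<lambda>x. \<bar>det (matrix (g' x))\<bar> * F(g x)) absolutely_integrable_on S"
    by (subst absolutely_integrable_on_1_iff) (simp add: f_def)
  have c2: "f absolutely_integrable_on T \<longleftrightarrow> F absolutely_integrable_on T" for T
    by (subst absolutely_integrable_on_1_iff) (simp add: f_def)
  have i1: "integral S (\<lambda>x. \<bar>det (matrix (g' x))\<bar> *\<^sub>R f(g x)) = vec b \<longleftrightarrow>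
        integral S (\<lambda>x. \<bar>det (matrix (g' x))\<bar> * F(g x)) = b"
    if "(\<lambda>x. \<bar>det (matrix (g' x))\<bar> *\<^sub>R f(g x)) absolutely_integrable_on S"
  proof -
    have "(\<lambda>x. \<bar>det (matrix (g' x))\<bar> *\<^sub>R f(g x)) integrable_on S"
      using that set_lebesgue_integral_eq_integral(1) by blast
    then show ?thesis
      by (simp add: vec1_eq integral_component_eq_cart[symmetric] f_def)
  qed
  have i2: "integral T f = vec b \<longleftrightarrow> integral T F = b" if "f absolutely_integrable_on T" for T
  proof -
    have "f integrable_on T"
      using that set_lebesgue_integral_eq_integral(1) by blast
    then show ?thesis
      by (simp add: vec1_eq integral_component_eq_cart[symmetric] f_def)
  qed
  show ?thesis
  proof
    assume L: "(\<lambda>x. \<bar>det (matrix (g' x))\<bar> * F(g x)) absolutely_integrable_on S \<and>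
           integral S (\<lambda>x. \<bar>det (matrix (g' x))\<bar> * F(g x)) = b"
    then have a: "(\<lambda>x. \<bar>det (matrix (g' x))\<bar> *\<^sub>R f(g x)) absolutely_integrable_on S" using c1 by blast
    then have "integral S (\<lambda>x. \<bar>det (matrix (g' x))\<bar> *\<^sub>R f(g x)) = vec b" using i1 L by blast
    with a th have "f absolutely_integrable_on (g ` S) \<and> integral (g ` S) f = vec b" by blast
    then show "F absolutely_integrable_on (g ` S) \<and> integral (g ` S) F = b" using c2 i2 by blast
  next
    assume R: "F absolutely_integrable_on (g ` S) \<and> integral (g ` S) F = b"
    then have a: "f absolutely_integrable_on (g ` S)" using c2 by blast
    then have "integral (g ` S) f = vec b" using i2 R by blast
    with a th have b: "(\<lambda>x. \<bar>det (matrix (g' x))\<bar> *\<^sub>R f(g x)) absolutely_integrable_on S \<and>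
           integral S (\<lambda>x. \<bar>det (matrix (g' x))\<bar> *\<^sub>R f(g x)) = vec b" by blast
    then show "(\<lambda>x. \<bar>det (matrix (g' x))\<bar> * F(g x)) absolutely_integrable_on S \<and>
           integral S (\<lambda>x. \<bar>det (matrix (g' x))\<bar> * F(g x)) = b" using c1 i1 by blast
  qed
qed



lemma norm2: "norm (y::real^2) = sqrt ((y$1)\<^sup>2 + (y$2)\<^sup>2)"
  by (simp add: norm_vec_def L2_set_def sum_2)

lemma deriv2_sqrt:
  fixes a b c d :: real
  assumes p0: "a\<^sup>2 + b\<^sup>2 > 0"
  shows "deriv (deriv (\<lambda>t. sqrt ((a+t*c)\<^sup>2 + (b+t*d)\<^sup>2))) 0 = (a*d - b*c)\<^sup>2 / sqrt (a\<^sup>2+b\<^sup>2) ^ 3"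
proof -
  define p where "p t = (a+t*c)\<^sup>2 + (b+t*d)\<^sup>2" for t
  define N where "N t = c*(a+t*c) + d*(b+t*d)" for t
  have dp: "(p has_real_derivative 2 * N t) (at t)" for t
    unfolding p_def N_def by (auto intro!: derivative_eq_intros simp: algebra_simps)
  have dg: "((\<lambda>t. sqrt (p t)) has_real_derivative N t / sqrt (p t)) (at t)" if "p t > 0" for t
    using that by (auto intro!: derivative_eq_intros dp simp: field_simps)
  have "open {t. 0 < p t}"
    unfolding p_def by (intro open_Collect_less continuous_intros)
  then have "\<forall>\<^sub>F t in nhds 0. p t > 0"
    using p0 eventually_nhds_in_open[of "{t. 0 < p t}" 0] by (auto simp: p_def)
  then have ev: "\<forall>\<^sub>F t in nhds 0. deriv (\<lambda>t. sqrt (p t)) t = N t / sqrt (p t)"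
    by eventually_elim (use dg DERIV_imp_deriv in blast)
  have dN: "(N has_real_derivative c\<^sup>2 + d\<^sup>2) (at t)" for t
    unfolding N_def by (auto intro!: derivative_eq_intros simp: power2_eq_square)
  have pp: "p 0 > 0" using p0 by (simp add: p_def)
  have "((\<lambda>t. N t / sqrt (p t)) has_real_derivative
          ((c\<^sup>2 + d\<^sup>2) * sqrt (p 0) - N 0 * (N 0 / sqrt (p 0))) / (sqrt (p 0) * sqrt (p 0))) (at 0)"
    using pp by (intro DERIV_divide dN dg) auto
  then have "deriv (\<lambda>t. N t / sqrt (p t)) 0 = ((c\<^sup>2 + d\<^sup>2) * sqrt (p 0) - N 0 * (N 0 / sqrt (p 0))) / (sqrt (p 0) * sqrt (p 0))"
    by (rule DERIV_imp_deriv)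
  also have "\<dots> = (a*d - b*c)\<^sup>2 / sqrt (a\<^sup>2+b\<^sup>2) ^ 3"
  proof -
    define s where "s = sqrt (p 0)"
    have s: "s * s = a\<^sup>2 + b\<^sup>2" using pp by (simp add: s_def p_def)
    have sp: "s > 0" using pp by (simp add: s_def)
    have N0: "N 0 = a*c + b*d" by (simp add: N_def)
    have key: "(c\<^sup>2 + d\<^sup>2) * (s * s) - (N 0)\<^sup>2 = (a*d - b*c)\<^sup>2"
      unfolding s N0 by (simp add: power2_eq_square algebra_simps)
    have "((c\<^sup>2 + d\<^sup>2) * s - N 0 * (N 0 / s)) / (s * s) = ((c\<^sup>2 + d\<^sup>2) * (s * s) - (N 0)\<^sup>2) / s ^ 3"
      using sp by (simp add: field_simps power2_eq_square power3_eq_cube)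
    also have "\<dots> = (a*d - b*c)\<^sup>2 / sqrt (a\<^sup>2+b\<^sup>2) ^ 3"
      unfolding key by (simp add: s_def p_def)
    finally show ?thesis by (simp add: s_def)
  qed
  finally have "deriv (\<lambda>t. N t / sqrt (p t)) 0 = (a*d - b*c)\<^sup>2 / sqrt (a\<^sup>2+b\<^sup>2) ^ 3" .
  moreover have "deriv (deriv (\<lambda>t. sqrt (p t))) 0 = deriv (\<lambda>t. N t / sqrt (p t)) 0"
    by (rule deriv_cong_ev[OF ev refl])
  ultimately show ?thesis unfolding p_def by simp
qed

lemma partial2_eq:
  fixes S :: "real^2^2" and k w :: "real^2" and j :: 2
  defines "y \<equiv> S *v (k - w)" and "v \<equiv> S *v axis j 1"
  assumes "y \<noteq> 0"
  shows "partial2 (\<lambda>q. norm (S *v (q - w))) j k = (y$1 * v$2 - y$2 * v$1)\<^sup>2 / norm y ^ 3"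
proof -
  have e: "S *v (k + t *\<^sub>R axis j 1 - w) = y + t *\<^sub>R v" for t
    unfolding y_def v_def by (simp add: algebra_simps matrix_vector_right_distrib matrix_vector_mult_scaleR)
  have "(\<lambda>t. norm (S *v (k + t *\<^sub>R axis j 1 - w))) = (\<lambda>t. sqrt ((y$1+t * v$1)\<^sup>2 + (y$2+t * v$2)\<^sup>2))"
    by (simp add: e norm2)
  moreover have "(y$1)\<^sup>2 + (y$2)\<^sup>2 > 0"
    using assms(3) by (metis norm2 zero_less_norm_iff real_sqrt_gt_0_iff)
  ultimately show ?thesis unfolding partial2_def
    by (simp add: deriv2_sqrt norm2 algebra_simps)
qed


definition phi :: "real \<Rightarrow> real \<Rightarrow> real" where "phi \<eta> s = 1 / (s * (\<eta>\<^sup>2 + 4 * s\<^sup>2))"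
definition Psi :: "real \<Rightarrow> real \<Rightarrow> real" where "Psi \<eta> s = pi / \<eta> * arctan (2 * s / \<eta>)"
definition ann :: "real \<Rightarrow> real \<Rightarrow> (real^2) set" where "ann a b = {y. a < norm y \<and> norm y \<le> b}"

lemma ann_eq: "ann a b = cball 0 b - cball 0 a"
  by (auto simp: ann_def)

lemma ann_lmeasurable: "ann a b \<in> lmeasurable"
  unfolding ann_eq by (intro fmeasurable.Diff) auto

lemma measure_cball2: "r \<ge> 0 \<Longrightarrow> Henstock_Kurzweil_Integration.content (cball (0::real^2) r) = r\<^sup>2 * pi"
  by (metis circle_area content_cball_conv_ball)

lemma measure_ann: "0 \<le> a \<Longrightarrow> a \<le> b \<Longrightarrow> measure lebesgue (ann a b) = pi * (b\<^sup>2 - a\<^sup>2)"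
  unfolding ann_eq
  by (subst measurable_measure_Diff) (auto simp: measure_cball2 algebra_simps)

lemma phi_mono: "0 < s \<Longrightarrow> s \<le> t \<Longrightarrow> phi \<eta> t \<le> phi \<eta> s"
proof -
  assume a: "0 < s" "s \<le> t"
  have "s * (\<eta>\<^sup>2 + 4 * s\<^sup>2) \<le> t * (\<eta>\<^sup>2 + 4 * t\<^sup>2)"
    using a by (intro mult_mono add_left_mono) (auto intro!: power_mono)
  moreover have "0 < s * (\<eta>\<^sup>2 + 4 * s\<^sup>2)" using a by (intro mult_pos_pos add_nonneg_pos) auto
  ultimately show ?thesis unfolding phi_def by (intro divide_left_mono) auto
qed

lemma phi_nonneg: "0 \<le> s \<Longrightarrow> 0 \<le> phi \<eta> s"
  unfolding phi_def by simp

lemma int_const_ann: "0 \<le> a \<Longrightarrow> a \<le> b \<Longrightarrow> integral (ann a b) (\<lambda>y. c) = c * (pi * (b\<^sup>2 - a\<^sup>2))"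
proof -
  assume "0 \<le> a" "a \<le> b"
  have "integral (ann a b) (\<lambda>y. c * 1) = c * integral (ann a b) (\<lambda>y. 1)"
    by (rule Henstock_Kurzweil_Integration.integral_mult_right)
  then show ?thesis using lmeasure_integral[OF ann_lmeasurable, of a b] measure_ann \<open>0 \<le> a\<close> \<open>a \<le> b\<close>
    by simp
qed

lemma phi_cont: "0 < \<eta> \<Longrightarrow> continuous_on (ann a b) (\<lambda>y. phi \<eta> (norm y))" if "0 \<le> a"
proof -
  assume "0 < \<eta>"
  have "norm y > 0" if "y \<in> ann a b" for y using that \<open>0 \<le> a\<close> by (auto simp: ann_def)
  moreover have "\<eta>\<^sup>2 + 4 * (norm y)\<^sup>2 \<noteq> 0" for y::"real^2" using \<open>0 < \<eta>\<close>
    by (metis add_pos_nonneg less_irrefl mult_nonneg_nonneg zero_le_numeral zero_le_power2 zero_less_power2)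
  ultimately show ?thesis unfolding phi_def
    by (intro continuous_intros) auto
qed

lemma phi_int_ann:
  assumes "0 < \<eta>" "0 < a"
  shows "(\<lambda>y. phi \<eta> (norm y)) integrable_on ann a b"
proof (rule measurable_bounded_by_integrable_imp_integrable_real)
  show "(\<lambda>y. phi \<eta> (norm y)) \<in> borel_measurable (lebesgue_on (ann a b))"
    using assms fmeasurableD[OF ann_lmeasurable] by (intro continuous_imp_measurable_on_sets_lebesgue phi_cont) auto
  show "(\<lambda>y. phi \<eta> a) integrable_on ann a b" by (rule integrable_on_const[OF ann_lmeasurable])
  show "\<bar>phi \<eta> (norm y)\<bar> \<le> phi \<eta> a" if "y \<in> ann a b" for y
    using that assms phi_mono[of a "norm y" \<eta>] phi_nonneg[of "norm y" \<eta>] by (auto simp: ann_def)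
  show "ann a b \<in> sets lebesgue" by (rule fmeasurableD[OF ann_lmeasurable])
qed

lemma phi_int_bounds:
  assumes "0 < \<eta>" "0 < a" "a \<le> b"
  shows "phi \<eta> b * (pi * (b\<^sup>2 - a\<^sup>2)) \<le> integral (ann a b) (\<lambda>y. phi \<eta> (norm y))"
    and "integral (ann a b) (\<lambda>y. phi \<eta> (norm y)) \<le> phi \<eta> a * (pi * (b\<^sup>2 - a\<^sup>2))"
proof -
  have i: "(\<lambda>y. phi \<eta> (norm y)) integrable_on ann a b" using phi_int_ann assms by blast
  have "integral (ann a b) (\<lambda>y. phi \<eta> b) \<le> integral (ann a b) (\<lambda>y. phi \<eta> (norm y))"
    by (rule integral_le[OF integrable_on_const[OF ann_lmeasurable] i])
       (use assms in \<open>auto simp: ann_def intro!: phi_mono\<close>)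
  then show "phi \<eta> b * (pi * (b\<^sup>2 - a\<^sup>2)) \<le> integral (ann a b) (\<lambda>y. phi \<eta> (norm y))"
    using int_const_ann assms by simp
  have "integral (ann a b) (\<lambda>y. phi \<eta> (norm y)) \<le> integral (ann a b) (\<lambda>y. phi \<eta> a)"
    by (rule integral_le[OF i integrable_on_const[OF ann_lmeasurable]])
       (use assms in \<open>auto simp: ann_def intro!: phi_mono\<close>)
  then show "integral (ann a b) (\<lambda>y. phi \<eta> (norm y)) \<le> phi \<eta> a * (pi * (b\<^sup>2 - a\<^sup>2))"
    using int_const_ann assms by simp
qed

lemma Psi_deriv: "0 < \<eta> \<Longrightarrow> (Psi \<eta> has_real_derivative 2 * pi / (\<eta>\<^sup>2 + 4 * s\<^sup>2)) (at s)"
proof -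
  assume h: "0 < \<eta>"
  have p: "\<eta>\<^sup>2 + 4 * s\<^sup>2 > 0" using h by (intro add_pos_nonneg) auto
  have "(Psi \<eta> has_real_derivative pi / \<eta> * (inverse (1 + (2 * s / \<eta>)\<^sup>2) * (2 / \<eta>))) (at s)"
    unfolding Psi_def using h by (auto intro!: derivative_eq_intros)
  moreover have "pi / \<eta> * (inverse (1 + (2 * s / \<eta>)\<^sup>2) * (2 / \<eta>)) = 2 * pi / (\<eta>\<^sup>2 + 4 * s\<^sup>2)"
    using h p by (simp add: field_simps power2_eq_square)
  ultimately show ?thesis by simp
qed

lemma Psi_bounds:
  assumes "0 < \<eta>" "0 < a" "a \<le> b"
  shows "phi \<eta> b * (pi * (b\<^sup>2 - a\<^sup>2)) \<le> Psi \<eta> b - Psi \<eta> a"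
    and "Psi \<eta> b - Psi \<eta> a \<le> phi \<eta> a * (pi * (b\<^sup>2 - a\<^sup>2))"
proof -
  have "phi \<eta> b * (pi * (b\<^sup>2 - a\<^sup>2)) \<le> Psi \<eta> b - Psi \<eta> a \<and> Psi \<eta> b - Psi \<eta> a \<le> phi \<eta> a * (pi * (b\<^sup>2 - a\<^sup>2))"
  proof (cases "a = b")
    case False
    then have ab: "a < b" using assms by simp
    obtain z where z: "a < z" "z < b" "Psi \<eta> b - Psi \<eta> a = (b - a) * (2 * pi / (\<eta>\<^sup>2 + 4 * z\<^sup>2))"
      using MVT2[OF ab, of "Psi \<eta>" "\<lambda>s. 2 * pi / (\<eta>\<^sup>2 + 4 * s\<^sup>2)"] Psi_deriv assms by blast
    have e: "phi \<eta> t * (pi * (b\<^sup>2 - a\<^sup>2)) = (b - a) * (pi * ((a + b) / (t * (\<eta>\<^sup>2 + 4 * t\<^sup>2))))" for t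
      by (simp add: phi_def power2_eq_square algebra_simps)
    have pz: "0 < \<eta>\<^sup>2 + 4 * z\<^sup>2" using assms by (intro add_pos_nonneg) auto
    have pb: "0 < \<eta>\<^sup>2 + 4 * b\<^sup>2" using assms by (intro add_pos_nonneg) auto
    have pa: "0 < \<eta>\<^sup>2 + 4 * a\<^sup>2" using assms by (intro add_pos_nonneg) auto
    have "(a + b) / (b * (\<eta>\<^sup>2 + 4 * b\<^sup>2)) \<le> (2 * b) / (b * (\<eta>\<^sup>2 + 4 * b\<^sup>2))"
      using assms ab pb by (intro divide_right_mono) auto
    also have "\<dots> = 2 / (\<eta>\<^sup>2 + 4 * b\<^sup>2)" using assms by simp
    also have "\<dots> \<le> 2 / (\<eta>\<^sup>2 + 4 * z\<^sup>2)"
      using pz pb z assms by (intro divide_left_mono add_left_mono mult_left_mono power_mono mult_pos_pos) auto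
    finally have l: "(a + b) / (b * (\<eta>\<^sup>2 + 4 * b\<^sup>2)) \<le> 2 / (\<eta>\<^sup>2 + 4 * z\<^sup>2)" .
    have "2 / (\<eta>\<^sup>2 + 4 * z\<^sup>2) \<le> 2 / (\<eta>\<^sup>2 + 4 * a\<^sup>2)"
      using pa pz z assms by (intro divide_left_mono add_left_mono mult_left_mono power_mono mult_pos_pos) auto
    also have "\<dots> = (2 * a) / (a * (\<eta>\<^sup>2 + 4 * a\<^sup>2))" using assms by simp
    also have "\<dots> \<le> (a + b) / (a * (\<eta>\<^sup>2 + 4 * a\<^sup>2))"
      using assms ab pa by (intro divide_right_mono) auto
    finally have u: "2 / (\<eta>\<^sup>2 + 4 * z\<^sup>2) \<le> (a + b) / (a * (\<eta>\<^sup>2 + 4 * a\<^sup>2))" .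
    have "(b - a) * (pi * ((a + b) / (b * (\<eta>\<^sup>2 + 4 * b\<^sup>2)))) \<le> (b - a) * (pi * (2 / (\<eta>\<^sup>2 + 4 * z\<^sup>2)))"
      using l ab by (intro mult_left_mono) auto
    moreover have "(b - a) * (pi * (2 / (\<eta>\<^sup>2 + 4 * z\<^sup>2))) \<le> (b - a) * (pi * ((a + b) / (a * (\<eta>\<^sup>2 + 4 * a\<^sup>2))))"
      using u ab by (intro mult_left_mono) auto
    ultimately show ?thesis unfolding e z(3) by (simp add: mult.commute[of 2 pi])
  qed simp
  then show "phi \<eta> b * (pi * (b\<^sup>2 - a\<^sup>2)) \<le> Psi \<eta> b - Psi \<eta> a"
    and "Psi \<eta> b - Psi \<eta> a \<le> phi \<eta> a * (pi * (b\<^sup>2 - a\<^sup>2))" by auto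
qed

lemma ann_split:
  assumes "0 < \<eta>" "0 < a" "a \<le> b" "b \<le> c"
  shows "integral (ann a c) (\<lambda>y. phi \<eta> (norm y)) = integral (ann a b) (\<lambda>y. phi \<eta> (norm y)) + integral (ann b c) (\<lambda>y. phi \<eta> (norm y))"
proof -
  have "ann a c = ann a b \<union> ann b c" using assms by (auto simp: ann_def)
  moreover have "ann a b \<inter> ann b c = {}" by (auto simp: ann_def)
  ultimately show ?thesis using phi_int_ann assms by (simp add: integral_Un)
qed



lemma ann_empty: "ann a a = {}" by (auto simp: ann_def)

lemma ann_exact:
  assumes "0 < \<eta>" "0 < a" "a \<le> b"
  shows "integral (ann a b) (\<lambda>y. phi \<eta> (norm y)) = Psi \<eta> b - Psi \<eta> a"
proof -
  define E where "E x y = integral (ann x y) (\<lambda>y. phi \<eta> (norm y)) - (Psi \<eta> y - Psi \<eta> x)" for x y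
  have Eadd: "E x z = E x y + E y z" if "0 < x" "x \<le> y" "y \<le> z" for x y z
    using ann_split[of \<eta> x y z] that assms unfolding E_def by simp
  have Ebd: "\<bar>E x y\<bar> \<le> (phi \<eta> x - phi \<eta> y) * (pi * (y\<^sup>2 - x\<^sup>2))" if "0 < x" "x \<le> y" for x y
    using phi_int_bounds[of \<eta> x y] Psi_bounds[of \<eta> x y] that assms unfolding E_def
    by (simp add: algebra_simps abs_le_iff)
  define C where "C = (phi \<eta> a - phi \<eta> b) * (2 * pi * b * (b - a))"
  have bound: "\<bar>E a b\<bar> \<le> C / real N" if N: "N > 0" for N :: nat
  proof -
    define r where "r i = a + real i * (b - a) / real N" for i :: nat
    have r0: "r 0 = a" by (simp add: r_def)
    have rN: "r N = b" using N by (simp add: r_def)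
    have rmono: "r i \<le> r (Suc i)" for i using assms N by (simp add: r_def field_simps)
    have rge: "a \<le> r i" for i using assms N by (simp add: r_def)
    have rle: "r i \<le> b" if "i \<le> N" for i
    proof -
      have "real i * (b - a) / real N \<le> real N * (b - a) / real N"
        using that assms N by (intro divide_right_mono mult_right_mono) auto
      then show ?thesis using N by (simp add: r_def)
    qed
    have rpos: "0 < r i" for i using rge[of i] assms by simp
    have sum: "E a (r m) = (\<Sum>i<m. E (r i) (r (Suc i)))" for m
    proof (induction m)
      case 0 show ?case by (simp add: r0 E_def ann_empty)
    next
      case (Suc m)
      have "E a (r (Suc m)) = E a (r m) + E (r m) (r (Suc m))"
        using Eadd[of a "r m" "r (Suc m)"] assms rge rmono by simp
      then show ?case using Suc by simp
    qed
    have "\<bar>E a b\<bar> \<le> (\<Sum>i<N. \<bar>E (r i) (r (Suc i))\<bar>)"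
      using sum[of N] rN by (simp add: sum_abs)
    also have "\<dots> \<le> (\<Sum>i<N. (phi \<eta> (r i) - phi \<eta> (r (Suc i))) * (2 * pi * b * (b - a) / real N))"
    proof (intro sum_mono)
      fix i assume i: "i \<in> {..<N}"
      have d: "phi \<eta> (r (Suc i)) \<le> phi \<eta> (r i)" using phi_mono rpos rmono by blast
      have "(r (Suc i))\<^sup>2 - (r i)\<^sup>2 = (r (Suc i) - r i) * (r (Suc i) + r i)"
        by (simp add: power2_eq_square algebra_simps)
      also have "r (Suc i) - r i = (b - a) / real N" using N by (simp add: r_def field_simps)
      finally have "(r (Suc i))\<^sup>2 - (r i)\<^sup>2 = (b - a) / real N * (r (Suc i) + r i)" .
      moreover have "r (Suc i) + r i \<le> 2 * b" using rle[of i] rle[of "Suc i"] i by auto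
      ultimately have "(r (Suc i))\<^sup>2 - (r i)\<^sup>2 \<le> (b - a) / real N * (2 * b)"
        using assms N by (metis diff_ge_0_iff_ge divide_nonneg_nonneg mult_left_mono of_nat_0_le_iff)
      then have "pi * ((r (Suc i))\<^sup>2 - (r i)\<^sup>2) \<le> pi * ((b - a) / real N * (2 * b))"
        by (intro mult_left_mono) auto
      then have "pi * ((r (Suc i))\<^sup>2 - (r i)\<^sup>2) \<le> 2 * pi * b * (b - a) / real N"
        by (simp add: algebra_simps)
      then have "(phi \<eta> (r i) - phi \<eta> (r (Suc i))) * (pi * ((r (Suc i))\<^sup>2 - (r i)\<^sup>2))
            \<le> (phi \<eta> (r i) - phi \<eta> (r (Suc i))) * (2 * pi * b * (b - a) / real N)"
        using d by (intro mult_left_mono) auto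
      then show "\<bar>E (r i) (r (Suc i))\<bar> \<le> (phi \<eta> (r i) - phi \<eta> (r (Suc i))) * (2 * pi * b * (b - a) / real N)"
        using Ebd[OF rpos[of i] rmono[of i]] by linarith
    qed
    also have "\<dots> = (\<Sum>i<N. phi \<eta> (r i) - phi \<eta> (r (Suc i))) * (2 * pi * b * (b - a) / real N)"
      by (rule sum_distrib_right[symmetric])
    also have "(\<Sum>i<N. phi \<eta> (r i) - phi \<eta> (r (Suc i))) = phi \<eta> a - phi \<eta> b"
      using sum_lessThan_telescope'[of "\<lambda>i. phi \<eta> (r i)" N] r0 rN by simp
    finally show ?thesis by (simp add: C_def)
  qed
  have "E a b = 0"
  proof (rule ccontr)
    assume ne: "E a b \<noteq> 0"
    obtain n :: nat where n: "C / \<bar>E a b\<bar> < real n" using reals_Archimedean2 by blast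
    have pos: "real (Suc n) > 0" by simp
    have "C / \<bar>E a b\<bar> < real (Suc n)" using n by simp
    then have "C < real (Suc n) * \<bar>E a b\<bar>" using ne by (simp add: divide_less_eq mult.commute)
    then have "C / real (Suc n) < \<bar>E a b\<bar>" using pos by (simp add: divide_less_eq mult.commute)
    with bound[of "Suc n"] show False by simp
  qed
  then show ?thesis by (simp add: E_def)
qed



lemma Psi_nonneg: "0 < \<eta> \<Longrightarrow> 0 \<le> s \<Longrightarrow> 0 \<le> Psi \<eta> s"
  unfolding Psi_def by (simp add: zero_le_arctan_iff)

lemma Psi_0: "Psi \<eta> 0 = 0" by (simp add: Psi_def)

lemma radial_ann:
  assumes "0 < \<eta>" "0 < R"
  shows "(\<lambda>y. phi \<eta> (norm y)) integrable_on ann 0 R \<and> integral (ann 0 R) (\<lambda>y. phi \<eta> (norm y)) = Psi \<eta> R"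
proof -
  define a where "a k = R / real (Suc k)" for k
  have apos: "0 < a k" for k using assms by (simp add: a_def)
  have ale: "a k \<le> R" for k using assms by (simp add: a_def field_simps)
  have amono: "a (Suc k) \<le> a k" for k using assms by (simp add: a_def frac_le)
  have alim: "a \<longlonglongrightarrow> 0"
    unfolding a_def using LIMSEQ_Suc[OF lim_const_over_n[of R]] by simp
  define f where "f k y = (if y \<in> ann (a k) R then phi \<eta> (norm y) else 0)" for k y
  have sub: "ann (a k) R \<inter> ann 0 R = ann (a k) R" for k using apos[of k] by (auto simp: ann_def)
  have intf: "f k integrable_on ann 0 R" for k
    unfolding f_def integrable_restrict_Int sub using phi_int_ann assms apos by blast
  have intfv: "integral (ann 0 R) (f k) = Psi \<eta> R - Psi \<eta> (a k)" for k
    unfolding f_def integral_restrict_Int sub using ann_exact assms apos ale by blast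
  have mc: "(\<lambda>y. phi \<eta> (norm y)) integrable_on ann 0 R \<and>
        (\<lambda>k. integral (ann 0 R) (f k)) \<longlonglongrightarrow> integral (ann 0 R) (\<lambda>y. phi \<eta> (norm y))"
  proof (rule monotone_convergence_increasing[OF intf])
    show "f k x \<le> f (Suc k) x" if "x \<in> ann 0 R" for k x
      using amono[of k] phi_nonneg[of "norm x" \<eta>] by (auto simp: f_def ann_def)
    show "(\<lambda>k. f k x) \<longlonglongrightarrow> phi \<eta> (norm x)" if "x \<in> ann 0 R" for x
    proof (rule tendsto_eventually)
      have "norm x > 0" using that by (auto simp: ann_def)
      then have "\<forall>\<^sub>F k in sequentially. a k < norm x" using order_tendstoD(2)[OF alim] by blast
      then show "\<forall>\<^sub>F k in sequentially. f k x = phi \<eta> (norm x)"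
        by eventually_elim (use that in \<open>auto simp: f_def ann_def\<close>)
    qed
    show "bounded (range (\<lambda>k. integral (ann 0 R) (f k)))"
      unfolding bounded_iff
    proof (intro exI ballI)
      fix z assume "z \<in> range (\<lambda>k. integral (ann 0 R) (f k))"
      then obtain k where z: "z = Psi \<eta> R - Psi \<eta> (a k)" using intfv by auto
      have "0 \<le> z" using ann_exact[of \<eta> "a k" R] phi_int_bounds(1)[of \<eta> "a k" R] assms apos ale z
        phi_nonneg[of R \<eta>] by (smt (verit) mult_nonneg_nonneg pi_gt_zero power_mono)
      moreover have "z \<le> Psi \<eta> R" using Psi_nonneg[of \<eta> "a k"] apos[of k] assms z by auto
      ultimately show "norm z \<le> Psi \<eta> R" by simp
    qed
  qed
  have "(\<lambda>k. Psi \<eta> R - Psi \<eta> (a k)) \<longlonglongrightarrow> Psi \<eta> R - Psi \<eta> 0"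
    by (intro tendsto_intros isCont_tendsto_compose[OF _ alim] DERIV_isCont[OF Psi_deriv[OF assms(1)]])
  then have "(\<lambda>k. integral (ann 0 R) (f k)) \<longlonglongrightarrow> Psi \<eta> R" by (simp add: intfv Psi_0)
  with mc show ?thesis using LIMSEQ_unique by blast
qed

lemma negl_ball_ann: "negligible ((ball 0 R - ann 0 R) \<union> (ann 0 R - ball 0 R))"
proof (rule negligible_subset)
  show "negligible ({0::real^2} \<union> sphere 0 R)" using negligible_sphere by auto
  show "(ball 0 R - ann 0 R) \<union> (ann 0 R - ball 0 R) \<subseteq> {0::real^2} \<union> sphere 0 R"
    by (auto simp: ann_def)
qed



definition Fv :: "real \<Rightarrow> real^2 \<Rightarrow> real^2 \<Rightarrow> real" where
  "Fv \<eta> v y = (y$1 * v$2 - y$2 * v$1)\<^sup>2 / (norm y ^ 3 * (\<eta>\<^sup>2 + 4 * (norm y)\<^sup>2))"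

definition Rm :: "real^2^2" where "Rm = vector [vector [0, -1], vector [1, 0]]"

lemma Rm1: "(Rm *v y) $ 1 = - (y $ 2)" and Rm2: "(Rm *v y) $ 2 = y $ 1"
  by (simp_all add: Rm_def matrix_vector_mult_def sum_2)

lemma det_Rm: "det Rm = 1"
  by (simp add: det_2 Rm_def)

lemma norm_Rm: "norm (Rm *v y) = norm y"
  by (simp add: norm2 Rm1 Rm2 add.commute)

lemma Rm_Rm: "Rm *v (Rm *v y) = - y"
  by (simp add: vec_eq_iff forall_2 Rm1 Rm2)

lemma Rm_image_ann: "(\<lambda>y. Rm *v y) ` ann a b = ann a b"
proof
  show "(\<lambda>y. Rm *v y) ` ann a b \<subseteq> ann a b" by (auto simp: ann_def norm_Rm)
  show "ann a b \<subseteq> (\<lambda>y. Rm *v y) ` ann a b"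
  proof
    fix y assume y: "y \<in> ann a b"
    have "y = Rm *v (- (Rm *v y))" by (simp add: vec_eq_iff forall_2 Rm1 Rm2)
    moreover have "- (Rm *v y) \<in> ann a b" using y by (auto simp: ann_def norm_Rm)
    ultimately show "y \<in> (\<lambda>y. Rm *v y) ` ann a b" by blast
  qed
qed

lemma Fv_sum:
  assumes "0 < \<eta>" "y \<noteq> 0"
  shows "Fv \<eta> v y + Fv \<eta> v (Rm *v y) = ((v$1)\<^sup>2 + (v$2)\<^sup>2) * phi \<eta> (norm y)"
proof -
  define n where "n = norm y"
  have n: "n > 0" using assms by (simp add: n_def)
  have n2: "(y$1)\<^sup>2 + (y$2)\<^sup>2 = n\<^sup>2" using norm2[of y] n_def by simp
  have D: "\<eta>\<^sup>2 + 4 * n\<^sup>2 > 0" using assms by (intro add_pos_nonneg) auto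
  have num: "(y$1 * v$2 - y$2 * v$1)\<^sup>2 + (-(y$2) * v$2 - y$1 * v$1)\<^sup>2 = n\<^sup>2 * ((v$1)\<^sup>2 + (v$2)\<^sup>2)"
    unfolding n2[symmetric] by (simp add: power2_eq_square algebra_simps)
  have "Fv \<eta> v y + Fv \<eta> v (Rm *v y) = ((y$1 * v$2 - y$2 * v$1)\<^sup>2 + (-(y$2) * v$2 - y$1 * v$1)\<^sup>2) / (n ^ 3 * (\<eta>\<^sup>2 + 4 * n\<^sup>2))"
    by (simp add: Fv_def Rm1 Rm2 norm_Rm n_def add_divide_distrib)
  also have "\<dots> = ((v$1)\<^sup>2 + (v$2)\<^sup>2) * phi \<eta> n"
  proof -
    have "n ^ 3 * (\<eta>\<^sup>2 + 4 * n\<^sup>2) = n\<^sup>2 * (n * (\<eta>\<^sup>2 + 4 * n\<^sup>2))"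
      by (simp add: power2_eq_square power3_eq_cube)
    then have "(n\<^sup>2 * ((v$1)\<^sup>2 + (v$2)\<^sup>2)) / (n ^ 3 * (\<eta>\<^sup>2 + 4 * n\<^sup>2))
       = ((v$1)\<^sup>2 + (v$2)\<^sup>2) / (n * (\<eta>\<^sup>2 + 4 * n\<^sup>2))"
      using n by (metis (no_types, lifting) mult_divide_mult_cancel_left_if zero_less_power2 less_irrefl)
    then show ?thesis unfolding num phi_def by simp
  qed
  finally show ?thesis by (simp add: n_def)
qed

lemma Fv_nonneg: "0 \<le> Fv \<eta> v y"
  unfolding Fv_def by simp

lemma Fv_cont: "0 < \<eta> \<Longrightarrow> continuous_on (ann 0 R) (Fv \<eta> v)"
proof -
  assume h: "0 < \<eta>"
  have "norm y > 0" if "y \<in> ann 0 R" for y using that by (auto simp: ann_def)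
  moreover have "\<eta>\<^sup>2 + 4 * (norm y)\<^sup>2 \<noteq> 0" for y::"real^2" using h
    by (metis add_pos_nonneg less_irrefl mult_nonneg_nonneg zero_le_numeral zero_le_power2 zero_less_power2)
  ultimately show ?thesis unfolding Fv_def
    by (intro continuous_intros) auto
qed

lemma sym_int:
  assumes "0 < \<eta>" "0 < R"
  shows "Fv \<eta> v absolutely_integrable_on ann 0 R \<and>
         integral (ann 0 R) (Fv \<eta> v) = ((v$1)\<^sup>2 + (v$2)\<^sup>2) / 2 * Psi \<eta> R"
proof -
  define A where "A = ann 0 R"
  define c where "c = (v$1)\<^sup>2 + (v$2)\<^sup>2"
  define G where "G (y::real^2) = c * phi \<eta> (norm y)" for y
  have Aleb: "A \<in> sets lebesgue" unfolding A_def by (rule fmeasurableD[OF ann_lmeasurable])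
  have rad: "(\<lambda>y. phi \<eta> (norm y)) integrable_on A" "integral A (\<lambda>y. phi \<eta> (norm y)) = Psi \<eta> R"
    using radial_ann[OF assms] by (auto simp: A_def)
  have Gint: "G integrable_on A" unfolding G_def using integrable_on_mult_right[OF rad(1), of c] by simp
  have GI: "integral A G = c * Psi \<eta> R" unfolding G_def
    using rad by (simp add: Henstock_Kurzweil_Integration.integral_mult_right)
  have ne: "y \<noteq> 0" if "y \<in> A" for y using that by (auto simp: A_def ann_def)
  have FleG: "\<bar>Fv \<eta> v y\<bar> \<le> G y" if "y \<in> A" for y
    using Fv_sum[OF assms(1) ne[OF that], of v] Fv_nonneg[of \<eta> v "Rm *v y"] Fv_nonneg[of \<eta> v y]
    by (simp add: G_def c_def)
  have Fint: "Fv \<eta> v integrable_on A"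
    by (rule measurable_bounded_by_integrable_imp_integrable_real[OF _ Gint FleG Aleb])
       (use Aleb Fv_cont[OF assms(1)] in \<open>auto simp: A_def intro: continuous_imp_measurable_on_sets_lebesgue\<close>)
  have Fabs: "Fv \<eta> v absolutely_integrable_on A"
    by (rule absolutely_integrable_integrable_bound[OF _ Fint Gint]) (use FleG in auto)
  have img: "(\<lambda>y. Rm *v y) ` A = A" unfolding A_def by (rule Rm_image_ann)
  have dm: "\<bar>det (matrix (\<lambda>y. Rm *v y))\<bar> = 1" by (simp add: det_Rm)
  have der: "((\<lambda>y. Rm *v y) has_derivative (\<lambda>y. Rm *v y)) (at x within A)" for x
    by (rule has_derivative_at_withinI[OF linear_imp_has_derivative]) simp
  have inj: "inj_on (\<lambda>y. Rm *v y) A"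
    by (rule inj_onI) (metis Rm_Rm neg_equal_iff_equal)
  have cv: "(\<lambda>x. \<bar>det (matrix (\<lambda>y. Rm *v y))\<bar> * Fv \<eta> v (Rm *v x)) absolutely_integrable_on A \<and>
           integral A (\<lambda>x. \<bar>det (matrix (\<lambda>y. Rm *v y))\<bar> * Fv \<eta> v (Rm *v x)) = integral A (Fv \<eta> v)"
    using cov_real[OF Aleb der inj, where F="Fv \<eta> v" and b="integral A (Fv \<eta> v)"] Fabs img by simp
  then have Frot_abs: "(\<lambda>y. Fv \<eta> v (Rm *v y)) absolutely_integrable_on A"
    and eqrot: "integral A (\<lambda>y. Fv \<eta> v (Rm *v y)) = integral A (Fv \<eta> v)"
    using dm by auto
  have "integral A (\<lambda>y. Fv \<eta> v y + Fv \<eta> v (Rm *v y)) = integral A G"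
    by (rule integral_cong) (use Fv_sum[OF assms(1)] ne in \<open>auto simp: G_def c_def\<close>)
  moreover have "integral A (\<lambda>y. Fv \<eta> v y + Fv \<eta> v (Rm *v y)) = integral A (Fv \<eta> v) + integral A (\<lambda>y. Fv \<eta> v (Rm *v y))"
    by (rule integral_add) (use Fint Frot_abs in \<open>auto dest: absolutely_integrable_on_def[THEN iffD1]\<close>)
  ultimately have "2 * integral A (Fv \<eta> v) = c * Psi \<eta> R" using eqrot GI by simp
  then show ?thesis using Fabs by (simp add: A_def c_def)
qed



lemma ball_int:
  assumes "0 < \<eta>" "0 < R"
  shows "Fv \<eta> v absolutely_integrable_on ball 0 R \<and>
         integral (ball 0 R) (Fv \<eta> v) = ((v$1)\<^sup>2 + (v$2)\<^sup>2) / 2 * Psi \<eta> R"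
proof -
  have n1: "negligible {x \<in> ann 0 R - ball 0 R. Fv \<eta> v x \<noteq> 0}"
    by (rule negligible_subset[OF negl_ball_ann]) auto
  have n2: "negligible {x \<in> ball 0 R - ann 0 R. Fv \<eta> v x \<noteq> 0}"
    by (rule negligible_subset[OF negl_ball_ann]) auto
  have a: "Fv \<eta> v absolutely_integrable_on ann 0 R \<and>
         integral (ann 0 R) (Fv \<eta> v) = ((v$1)\<^sup>2 + (v$2)\<^sup>2) / 2 * Psi \<eta> R"
    by (rule sym_int[OF assms])
  have b: "Fv \<eta> v absolutely_integrable_on ball 0 R"
    by (rule absolutely_integrable_spike_set[OF conjunct1[OF a] n1 n2])
  have "integral (ann 0 R) (Fv \<eta> v) = integral (ball 0 R) (Fv \<eta> v)"
    by (rule integral_spike_set[OF n1 n2])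
  then show ?thesis using a b by argo
qed

lemma lin_val:
  fixes S :: "real^2^2" and w :: "real^2" and j :: 2
  assumes inv: "invertible S" and e: "0 < \<epsilon>" and h: "0 < \<eta>"
  shows "lin_integral S w \<epsilon> j \<eta> = ((S$1$j)\<^sup>2 + (S$2$j)\<^sup>2) * pi * arctan (\<epsilon> / \<eta>) / (2 * \<bar>det S\<bar>)"
proof -
  define v where "v = S *v axis j 1"
  have v1: "v$1 = S$1$j" and v2: "v$2 = S$2$j"
    by (simp_all add: v_def matrix_vector_mult_basis column_def)
  define K where "K = {k. 2 * norm (S *v (k - w)) < \<epsilon>}"
  define g where "g k = S *v (k - w)" for k
  define R where "R = \<epsilon> / 2"
  have R: "0 < R" using e by (simp add: R_def)
  obtain A' where A': "S ** A' = mat 1" "A' ** S = mat 1" using inv unfolding invertible_def by blast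
  have linv: "A' *v (S *v x) = x" for x using A'(2) by (simp add: matrix_vector_mul_assoc)
  have rinv: "S *v (A' *v x) = x" for x using A'(1) by (simp add: matrix_vector_mul_assoc)
  have dS: "det S \<noteq> 0" using inv invertible_det_nz by blast
  have gz: "g k = 0 \<longleftrightarrow> k = w" for k
  proof
    assume "g k = 0" then have "A' *v (S *v (k - w)) = 0" by (simp add: g_def)
    then show "k = w" by (simp add: linv)
  next
    assume "k = w" then show "g k = 0" by (simp add: g_def)
  qed
  have Kleb: "K \<in> sets lebesgue"
  proof -
    have c: "continuous_on UNIV (\<lambda>x. S *v (x - w))"
      using continuous_on_compose[of UNIV "\<lambda>x. x - w" "(*v) S"]
        linear_continuous_on[OF matrix_vector_mul_bounded_linear[of S]]
      by (simp add: continuous_on_diff)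
    have "open K" unfolding K_def by (intro open_Collect_less continuous_intros c)
    then show ?thesis by (simp add: borel_open)
  qed
  have der: "(g has_derivative (\<lambda>h. S *v h)) (at x within K)" for x
  proof -
    have "g = (\<lambda>k. S *v k - S *v w)" by (simp add: g_def fun_eq_iff matrix_vector_mult_diff_distrib)
    moreover have "((\<lambda>k. S *v k - S *v w) has_derivative (\<lambda>h. S *v h - 0)) (at x within K)"
      by (intro has_derivative_diff has_derivative_at_withinI[OF linear_imp_has_derivative] has_derivative_const) simp
    ultimately show ?thesis by simp
  qed
  have inj: "inj_on g K"
  proof (rule inj_onI)
    fix x y assume "x \<in> K" "y \<in> K" "g x = g y"
    then have "A' *v g x = A' *v g y" by simp
    then have "x - w = y - w" by (simp add: g_def linv)
    then show "x = y" by simp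
  qed
  have img: "g ` K = ball 0 R"
  proof
    show "g ` K \<subseteq> ball 0 R" by (auto simp: g_def K_def R_def)
    show "ball 0 R \<subseteq> g ` K"
    proof
      fix y assume y: "y \<in> ball (0::real^2) R"
      have "g (w + A' *v y) = y" by (simp add: g_def rinv)
      moreover have "w + A' *v y \<in> K" using y by (simp add: K_def g_def rinv R_def)
      ultimately show "y \<in> g ` K" by force
    qed
  qed
  have bi: "Fv \<eta> v absolutely_integrable_on ball 0 R \<and>
         integral (ball 0 R) (Fv \<eta> v) = ((v$1)\<^sup>2 + (v$2)\<^sup>2) / 2 * Psi \<eta> R"
    using ball_int[OF h R] .
  have cv: "integral K (\<lambda>x. \<bar>det (matrix (\<lambda>h. S *v h))\<bar> * Fv \<eta> v (g x)) = ((v$1)\<^sup>2 + (v$2)\<^sup>2) / 2 * Psi \<eta> R"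
    using cov_real[OF Kleb der inj, where F="Fv \<eta> v" and b="((v$1)\<^sup>2 + (v$2)\<^sup>2) / 2 * Psi \<eta> R"] bi
    unfolding img by blast
  then have cv2: "\<bar>det S\<bar> * integral K (\<lambda>x. Fv \<eta> v (g x)) = ((v$1)\<^sup>2 + (v$2)\<^sup>2) / 2 * Psi \<eta> R"
    by (simp add: Henstock_Kurzweil_Integration.integral_mult_right)
  have pw: "partial2 (\<lambda>q. norm (S *v (q - w))) j k / (\<eta>\<^sup>2 + 4 * (norm (S *v (k - w)))\<^sup>2) = Fv \<eta> v (g k)"
    if "k \<noteq> w" for k
  proof -
    have "S *v (k - w) \<noteq> 0" using gz that by (simp add: g_def)
    then show ?thesis using partial2_eq[of S k w j] by (simp add: Fv_def g_def v_def)
  qed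
  have "integral K (\<lambda>k. partial2 (\<lambda>q. norm (S *v (q - w))) j k / (\<eta>\<^sup>2 + 4 * (norm (S *v (k - w)))\<^sup>2))
      = integral K (\<lambda>k. Fv \<eta> v (g k))"
    by (rule integral_spike[of "{w}"]) (use pw in auto)
  then have "lin_integral S w \<epsilon> j \<eta> = \<eta> * integral K (\<lambda>k. Fv \<eta> v (g k))"
    by (simp add: lin_integral_def K_def)
  also have "\<dots> = \<eta> * (((v$1)\<^sup>2 + (v$2)\<^sup>2) / 2 * Psi \<eta> R) / \<bar>det S\<bar>"
    using cv2 dS by (simp add: field_simps)
  also have "\<dots> = ((S$1$j)\<^sup>2 + (S$2$j)\<^sup>2) * pi * arctan (\<epsilon> / \<eta>) / (2 * \<bar>det S\<bar>)"
    using h by (simp add: Psi_def R_def v1 v2)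
  finally show ?thesis .
qed



lemma part1:
  fixes S :: "real^2^2" and w :: "real^2" and j :: 2
  assumes inv: "invertible S" and e: "0 < \<epsilon>"
  shows "((\<lambda>\<eta>. 1 / (2 * pi)\<^sup>2 * lin_integral S w \<epsilon> j \<eta>) \<longlongrightarrow>
               ((S $ 1 $ j)\<^sup>2 + (S $ 2 $ j)\<^sup>2) / (16 * \<bar>det S\<bar>)) (at_right 0)"
proof -
  define c where "c = 1 / (2 * pi)\<^sup>2 * (((S$1$j)\<^sup>2 + (S$2$j)\<^sup>2) * pi / (2 * \<bar>det S\<bar>))"
  have ev: "\<forall>\<^sub>F \<eta> in at_right 0. c * arctan (\<epsilon> / \<eta>) = 1 / (2 * pi)\<^sup>2 * lin_integral S w \<epsilon> j \<eta>"
    by (rule eventually_at_rightI[of 0 1]) (auto simp: lin_val[OF inv e] c_def)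
  have "filterlim (\<lambda>\<eta>. \<epsilon> / \<eta>) at_top (at_right 0)"
    using filterlim_tendsto_pos_mult_at_top[OF tendsto_const e filterlim_inverse_at_top_right]
    by (simp add: divide_inverse)
  then have "((\<lambda>\<eta>. arctan (\<epsilon> / \<eta>)) \<longlongrightarrow> pi / 2) (at_right 0)"
    using filterlim_compose[OF tendsto_arctan_at_top] by blast
  then have "((\<lambda>\<eta>. c * arctan (\<epsilon> / \<eta>)) \<longlongrightarrow> c * (pi / 2)) (at_right 0)"
    by (intro tendsto_intros)
  moreover have "c * (pi / 2) = ((S $ 1 $ j)\<^sup>2 + (S $ 2 $ j)\<^sup>2) / (16 * \<bar>det S\<bar>)"
    using invertible_det_nz[of S] inv by (simp add: c_def field_simps power2_eq_square)
  ultimately have "((\<lambda>\<eta>. c * arctan (\<epsilon> / \<eta>)) \<longlongrightarrow> ((S $ 1 $ j)\<^sup>2 + (S $ 2 $ j)\<^sup>2) / (16 * \<bar>det S\<bar>)) (at_right 0)"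
    by (metis (no_types, lifting))
  then show ?thesis by (rule tendsto_cong[OF ev, THEN iffD1])
qed

theorem mainTheorem11:
  shows "(\<forall>(S::real^2^2) (w::real^2) (\<epsilon>::real) (j::2).
            invertible S \<longrightarrow> \<epsilon> > 0 \<longrightarrow>
            ((\<lambda>\<eta>. 1 / (2 * pi)\<^sup>2 * lin_integral S w \<epsilon> j \<eta>) \<longlongrightarrow>
               ((S $ 1 $ j)\<^sup>2 + (S $ 2 $ j)\<^sup>2) / (16 * \<bar>det S\<bar>)) (at_right 0))
       \<and> (\<forall>(n::nat) (Sl::nat \<Rightarrow> real^2^2) (wl::nat \<Rightarrow> real^2) (\<epsilon>::real) (j::2) (\<sigma>::real).
            (\<forall>l\<in>{1..n}. invertible (Sl l)) \<longrightarrow> \<epsilon> > 0 \<longrightarrow>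
            \<sigma> = 1 / (2 * pi)\<^sup>2 * (\<Sum>l=1..n. Lim (at_right 0) (lin_integral (Sl l) (wl l) \<epsilon> j)) \<longrightarrow>
            \<sigma> = 1 / 16 * (\<Sum>l=1..n. ((Sl l $ 1 $ j)\<^sup>2 + (Sl l $ 2 $ j)\<^sup>2) / \<bar>det (Sl l)\<bar>))"
proof (intro conjI allI impI)
  fix S :: "real^2^2" and w :: "real^2" and \<epsilon> :: real and j :: 2
  assume "invertible S" "\<epsilon> > 0"
  then show "((\<lambda>\<eta>. 1 / (2 * pi)\<^sup>2 * lin_integral S w \<epsilon> j \<eta>) \<longlongrightarrow>
               ((S $ 1 $ j)\<^sup>2 + (S $ 2 $ j)\<^sup>2) / (16 * \<bar>det S\<bar>)) (at_right 0)"
    by (rule part1)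
next
  fix n :: nat and Sl :: "nat \<Rightarrow> real^2^2" and wl :: "nat \<Rightarrow> real^2" and \<epsilon> :: real and j :: 2 and \<sigma> :: real
  assume inv: "\<forall>l\<in>{1..n}. invertible (Sl l)" and e: "\<epsilon> > 0"
    and s: "\<sigma> = 1 / (2 * pi)\<^sup>2 * (\<Sum>l=1..n. Lim (at_right 0) (lin_integral (Sl l) (wl l) \<epsilon> j))"
  have L: "Lim (at_right 0) (lin_integral (Sl l) (wl l) \<epsilon> j) =
      (2 * pi)\<^sup>2 * (((Sl l $ 1 $ j)\<^sup>2 + (Sl l $ 2 $ j)\<^sup>2) / (16 * \<bar>det (Sl l)\<bar>))" if "l \<in> {1..n}" for l
  proof (rule tendsto_Lim)
    show "\<not> trivial_limit (at_right (0::real))" by simp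
    have "((\<lambda>\<eta>. (2 * pi)\<^sup>2 * (1 / (2 * pi)\<^sup>2 * lin_integral (Sl l) (wl l) \<epsilon> j \<eta>)) \<longlongrightarrow>
       (2 * pi)\<^sup>2 * (((Sl l $ 1 $ j)\<^sup>2 + (Sl l $ 2 $ j)\<^sup>2) / (16 * \<bar>det (Sl l)\<bar>))) (at_right 0)"
      by (intro tendsto_mult_left part1) (use inv that e in auto)
    then show "(lin_integral (Sl l) (wl l) \<epsilon> j \<longlongrightarrow>
       (2 * pi)\<^sup>2 * (((Sl l $ 1 $ j)\<^sup>2 + (Sl l $ 2 $ j)\<^sup>2) / (16 * \<bar>det (Sl l)\<bar>))) (at_right 0)"
      by simp
  qed
  have "\<sigma> = 1 / (2 * pi)\<^sup>2 * (\<Sum>l=1..n. (2 * pi)\<^sup>2 * (((Sl l $ 1 $ j)\<^sup>2 + (Sl l $ 2 $ j)\<^sup>2) / (16 * \<bar>det (Sl l)\<bar>)))"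
    unfolding s by (simp add: L)
  also have "\<dots> = (\<Sum>l=1..n. ((Sl l $ 1 $ j)\<^sup>2 + (Sl l $ 2 $ j)\<^sup>2) / (16 * \<bar>det (Sl l)\<bar>))"
    by (simp add: sum_distrib_left)
  also have "\<dots> = 1 / 16 * (\<Sum>l=1..n. ((Sl l $ 1 $ j)\<^sup>2 + (Sl l $ 2 $ j)\<^sup>2) / \<bar>det (Sl l)\<bar>)"
    by (simp add: sum_distrib_left)
  finally show "\<sigma> = 1 / 16 * (\<Sum>l=1..n. ((Sl l $ 1 $ j)\<^sup>2 + (Sl l $ 2 $ j)\<^sup>2) / \<bar>det (Sl l)\<bar>)" .
qed

end
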